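(* Let $M$ be a $d$-dimensional victim GNN satisfying the embedding assumption below, and let $\mu_M$ be a probability measure on its set of stationary points $\mathcal{S}(M)$ from which samples can be drawn. Suppose there is $\gamma_M>0$ such that for every independently trained model $I$, $\mu_M(\mathcal{S}(M)\setminus\mathcal{S}(I))\ge\gamma_M$. Let $Z$ be a GNN that is either (i) an independently trained model, or (ii) a surrogate of $M$ with reconstruction error $\epsilon=0$, i.e. its embeddings are $\mathbf{h}_i(G,X;Z)=\phi(\mathbf{h}_i(G,X;M))$ for some differentiable $\phi:\mathbb{R}^d\to\mathbb{R}^{d'}$ satisfying local invertibility: $\nabla_{\mathbf{w}}\phi|_{\mathbf{h}}:=\lim_{t\to0}\frac{\phi(\mathbf{h}+t\mathbf{w})-\phi(\mathbf{h})}{t}\neq\mathbf{0}$ for all $\mathbf{h}\in\mathbb{R}^d$ and unit $\mathbf{w}\in\mathbb{R}^d$. Consider the algorithm: draw a set $T$ of independent samples from $\mathcal{S}(M)$ according to $\mu_M$; output "Surrogate" if $T\subseteq\mathcal{S}(Z)$ and "Independent" otherwise. Then this algorithm outputs the correct answer (Surrogate in case (ii), Independent in case (i)) with probability at least $1-e^{-2|T|\gamma_M^2}$.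
   Context: A graph is a pair $(G,X)$ with $G=(V,E)$ having $n$ nodes, node features $\mathbf{x}_i\in\mathbb{R}^D$, $X=(\mathbf{x}_1,\dots,\mathbf{x}_n)$; $\mathcal{D}$ is a data distribution over feasible pairs $(G,X)$. A $d$-dimensional GNN $F$ maps $(G,X)$ to $\mathbb{R}^{d\times n}$; its $i$-th column $\mathbf{h}_i(G,X;F)$ is the embedding of node $i$. Embedding assumption on $M$: $\mathbf{h}_i(G,X;M)$ is twice-differentiable in $X$ with bounded Hessian and $0<\underline{\alpha}_M\le\|\mathbf{h}_i\|\le\overline{\alpha}_M$ for all feasible $G,X,i$. Query tuples: $\mathcal{Q}=\{(G,X,i,\mathbf{w}) : (G,X)\in\mathrm{supp}(\mathcal{D}),\ i\in\{1,\dots,n\},\ \mathbf{w}\in\mathbb{R}^D,\ \|\mathbf{w}\|=1\}$. For $\tau\in\mathbb{R}$, $\mathbf{h}_i^{(\tau\mathbf{w})}(G,X;F)$ is the embedding of node $i$ when $\mathbf{x}_i$ is replaced by $\mathbf{x}_i+\tau\mathbf{w}$; $\nabla_{\mathbf{w}}\mathbf{h}_i(G,X;F)=\lim_{\tau\to0}(\mathbf{h}_i^{(\tau\mathbf{w})}(G,X;F)-\mathbf{h}_i(G,X;F))/\tau$. The stationary points of $F$ are $\mathcal{S}(F)=\{(G,X,i,\mathbf{w})\in\mathcal{Q} : \|\nabla_{\mathbf{w}}\mathbf{h}_i(G,X;F)\|=0\}$. The probability is over the random draw of $T$. *)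

theory Defs
  imports "HOL-Probability.Probability"
begin

text \<open>Graphs have node set the finite type 'n; a graph structure is an edge set on 'n,
  node features form a matrix X :: real^'D^'n whose row X $ i is the feature of node i.\<close>

type_synonym ('n, 'D, 'd) gnn = "('n \<times> 'n) set \<Rightarrow> real^'D^'n \<Rightarrow> real^'d^'n"

definition emb :: "('n, 'D, 'd) gnn \<Rightarrow> ('n \<times> 'n) set \<Rightarrow> real^'D^'n \<Rightarrow> 'n \<Rightarrow> real^'d" where
  "emb F G X i = F G X $ i"

definition feat_upd :: "real^'D^'n \<Rightarrow> 'n \<Rightarrow> real^'D \<Rightarrow> real^'D^'n" where
  "feat_upd X i v = (\<chi> j. if j = i then X $ j + v else X $ j)"

definition queries :: "(('n \<times> 'n) set \<times> (real^'D^'n)) set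
    \<Rightarrow> (('n \<times> 'n) set \<times> (real^'D^'n) \<times> 'n \<times> (real^'D)) set" where
  "queries Supp = {(G, X, i, w). (G, X) \<in> Supp \<and> norm w = 1}"

definition has_dir_deriv :: "('n::finite, 'D::finite, 'd::finite) gnn \<Rightarrow> ('n \<times> 'n) set \<Rightarrow> real^'D^'n \<Rightarrow> 'n
    \<Rightarrow> real^'D \<Rightarrow> real^'d \<Rightarrow> bool" where
  "has_dir_deriv F G X i w v \<longleftrightarrow>
     ((\<lambda>\<tau>. (emb F G (feat_upd X i (\<tau> *\<^sub>R w)) i - emb F G X i) /\<^sub>R \<tau>) \<longlongrightarrow> v) (at 0)"

definition stationary :: "(('n::finite \<times> 'n) set \<times> (real^'D::finite^'n)) set \<Rightarrow> ('n, 'D, 'd::finite) gnn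
    \<Rightarrow> (('n \<times> 'n) set \<times> (real^'D^'n) \<times> 'n \<times> (real^'D)) set" where
  "stationary Supp F = {(G, X, i, w) \<in> queries Supp.
      \<exists>v. has_dir_deriv F G X i w v \<and> norm v = 0}"

definition embedding_assumption :: "(('n::finite \<times> 'n) set \<times> (real^'D::finite^'n)) set \<Rightarrow> ('n, 'D, 'd::finite) gnn
    \<Rightarrow> real \<Rightarrow> real \<Rightarrow> bool" where
  "embedding_assumption Supp M lo hi \<longleftrightarrow> 0 < lo \<and>
     (\<exists>(D1 :: ('n \<times> 'n) set \<Rightarrow> 'n \<Rightarrow> real^'D^'n \<Rightarrow> ((real^'D^'n) \<Rightarrow>\<^sub>L (real^'d)))
        (D2 :: ('n \<times> 'n) set \<Rightarrow> 'n \<Rightarrow> real^'D^'n \<Rightarrow> real^'D^'n \<Rightarrow> ((real^'D^'n) \<Rightarrow>\<^sub>L (real^'d)))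
        (B :: real).
       \<forall>(G, X) \<in> Supp. \<forall>i.
         (\<forall>Y. ((\<lambda>Y'. emb M G Y' i) has_derivative blinfun_apply (D1 G i Y)) (at Y)) \<and>
         (\<forall>Y. (D1 G i has_derivative D2 G i Y) (at Y)) \<and>
         (\<forall>Y. onorm (D2 G i Y) \<le> B) \<and>
         lo \<le> norm (emb M G X i) \<and> norm (emb M G X i) \<le> hi)"

end

theory Submission
  imports Defs
begin
lemma quot_iff:
  fixes g :: "real \<Rightarrow> 'a::real_normed_vector"
  shows "((\<lambda>\<tau>. (g \<tau> - g 0) /\<^sub>R \<tau>) \<longlongrightarrow> v) (at 0) \<longleftrightarrow> (g has_vector_derivative v) (at 0)"
proof -
  have eq: "norm (g h - g 0 - h *\<^sub>R v) / \<bar>h\<bar> = norm ((g h - g 0) /\<^sub>R h - v)" if "h \<noteq> 0" for h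
  proof -
    have "g h - g 0 - h *\<^sub>R v = h *\<^sub>R ((g h - g 0) /\<^sub>R h - v)" using that by (simp add: algebra_simps)
    then show ?thesis using that by simp
  qed
  have "(g has_vector_derivative v) (at 0) \<longleftrightarrow> ((\<lambda>h. norm (g (0 + h) - g 0 - h *\<^sub>R v) / norm h) \<longlongrightarrow> 0) (at 0)"
    unfolding has_vector_derivative_def has_derivative_at by (simp add: bounded_linear_scaleR_left)
  also have "\<dots> \<longleftrightarrow> ((\<lambda>h. norm ((g h - g 0) /\<^sub>R h - v)) \<longlongrightarrow> 0) (at 0)"
    by (rule filterlim_cong) (auto simp: eventually_at_filter eq intro!: always_eventually)
  also have "\<dots> \<longleftrightarrow> ((\<lambda>\<tau>. (g \<tau> - g 0) /\<^sub>R \<tau>) \<longlongrightarrow> v) (at 0)"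
    by (simp add: tendsto_norm_zero_iff LIM_zero_iff)
  finally show ?thesis ..
qed

lemma ineq: fixes p :: real assumes "0 \<le> p" "p \<le> 1" shows "1 - p \<le> exp (- 2 * p\<^sup>2)"
proof -
  let ?f = "\<lambda>x::real. (1 - x) * exp (2 * x\<^sup>2)"
  have d: "(?f has_real_derivative (- (exp (2*x\<^sup>2) * (1 - 2*x)\<^sup>2))) (at x)" for x
    by (auto intro!: derivative_eq_intros simp: power2_eq_square algebra_simps)
  have "?f p \<le> ?f 0"
  proof (rule DERIV_nonpos_imp_nonincreasing[of 0 p ?f])
    fix x :: real
    show "\<exists>y. DERIV ?f x :> y \<and> y \<le> 0"
      by (rule exI[of _ "- exp (2*x\<^sup>2) * (1 - 2*x)\<^sup>2"]) (use d[of x] in simp)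
  qed (use assms in auto)
  then have "(1 - p) * exp (2 * p\<^sup>2) \<le> 1" by simp
  then show ?thesis by (simp add: exp_minus field_simps)
qed

lemma feat_upd_0: "feat_upd X i 0 = X"
  by (simp add: feat_upd_def vec_eq_iff)

lemma surrogate_stationary:
  fixes \<phi> :: "real^'d::finite \<Rightarrow> real^'e::finite"
    and M :: "('n::finite, 'D::finite, 'd) gnn" and Z :: "('n, 'D, 'e) gnn"
  assumes diff: "\<forall>h. \<phi> differentiable (at h)"
    and comp: "\<forall>G X i. emb Z G X i = \<phi> (emb M G X i)"
  shows "stationary Supp M \<subseteq> stationary Supp Z"
proof
  fix q assume q: "q \<in> stationary Supp M"
  obtain G X i w where qe: "q = (G, X, i, w)" by (cases q) auto
  from q qe have qq: "(G, X, i, w) \<in> queries Supp" and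
    dd: "has_dir_deriv M G X i w 0"
    by (auto simp: stationary_def)
  define g where "g = (\<lambda>\<tau>::real. emb M G (feat_upd X i (\<tau> *\<^sub>R w)) i)"
  have g0: "g 0 = emb M G X i" by (simp add: g_def feat_upd_0)
  have "((\<lambda>\<tau>. (g \<tau> - g 0) /\<^sub>R \<tau>) \<longlongrightarrow> 0) (at 0)"
    using dd unfolding has_dir_deriv_def g0 by (simp add: g_def)
  then have gd: "(g has_vector_derivative 0) (at 0)" by (simp add: quot_iff)
  obtain D where D: "(\<phi> has_derivative D) (at (g 0))"
    using diff by (auto simp: differentiable_def)
  have "((\<phi> \<circ> g) has_derivative (D \<circ> (\<lambda>\<tau>. \<tau> *\<^sub>R 0))) (at 0)"
    using diff_chain_at[OF gd[unfolded has_vector_derivative_def] D] .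
  moreover have "D \<circ> (\<lambda>\<tau>::real. \<tau> *\<^sub>R 0) = (\<lambda>\<tau>. \<tau> *\<^sub>R 0)"
    using linear_0[OF has_derivative_linear[OF D]] by (auto simp: fun_eq_iff)
  ultimately have "((\<phi> \<circ> g) has_vector_derivative 0) (at 0)"
    by (simp add: has_vector_derivative_def)
  then have "((\<lambda>\<tau>. ((\<phi> \<circ> g) \<tau> - (\<phi> \<circ> g) 0) /\<^sub>R \<tau>) \<longlongrightarrow> 0) (at 0)"
    using quot_iff[of "\<phi> \<circ> g"] by simp
  then have "has_dir_deriv Z G X i w 0"
    unfolding has_dir_deriv_def using g0 by (simp only: g_def o_def comp[rule_format])
  then show "q \<in> stationary Supp Z" using qq qe by (auto simp: stationary_def)
qed

theorem theorem1:
  fixes Supp :: "(('n::finite \<times> 'n) set \<times> (real^'D::finite^'n)) set"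
    and M :: "('n, 'D, 'd::finite) gnn"
    and Z :: "('n, 'D, 'e::finite) gnn"
    and Indep :: "('n, 'D, 'e) gnn set"
    and \<mu> :: "(('n \<times> 'n) set \<times> (real^'D^'n) \<times> 'n \<times> (real^'D)) measure"
    and lo hi \<gamma> :: real
    and m :: nat
  assumes emb_M: "embedding_assumption Supp M lo hi"
    and prob: "prob_space \<mu>"
    and space_mu: "space \<mu> = stationary Supp M"
    and gamma_pos: "\<gamma> > 0"
    and gap: "\<forall>I \<in> Indep. measure \<mu> (stationary Supp M - stationary Supp I) \<ge> \<gamma>"
  shows
    "(Z \<in> Indep \<longrightarrow>
        measure (PiM {..<m} (\<lambda>_. \<mu>))
          {t \<in> space (PiM {..<m} (\<lambda>_. \<mu>)). \<not> (\<forall>k<m. t k \<in> stationary Supp Z)}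
        \<ge> 1 - exp (- 2 * real m * \<gamma>\<^sup>2))
     \<and>
     ((\<exists>\<phi> :: real^'d \<Rightarrow> real^'e.
         (\<forall>h. \<phi> differentiable (at h)) \<and>
         (\<forall>h w. norm w = 1 \<longrightarrow>
             \<not> ((\<lambda>t. (\<phi> (h + t *\<^sub>R w) - \<phi> h) /\<^sub>R t) \<longlongrightarrow> 0) (at 0)) \<and>
         (\<forall>G X i. emb Z G X i = \<phi> (emb M G X i)))
      \<longrightarrow>
        measure (PiM {..<m} (\<lambda>_. \<mu>))
          {t \<in> space (PiM {..<m} (\<lambda>_. \<mu>)). \<forall>k<m. t k \<in> stationary Supp Z}
        \<ge> 1 - exp (- 2 * real m * \<gamma>\<^sup>2))"
proof (intro conjI impI)
  interpret P: prob_space "PiM {..<m} (\<lambda>_. \<mu>)"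
    by (rule prob_space_PiM) (use prob in auto)
  interpret mu: prob_space \<mu> by (rule prob)
  {
    assume "\<exists>\<phi> :: real^'d \<Rightarrow> real^'e.
         (\<forall>h. \<phi> differentiable (at h)) \<and>
         (\<forall>h w. norm w = 1 \<longrightarrow>
             \<not> ((\<lambda>t. (\<phi> (h + t *\<^sub>R w) - \<phi> h) /\<^sub>R t) \<longlongrightarrow> 0) (at 0)) \<and>
         (\<forall>G X i. emb Z G X i = \<phi> (emb M G X i))"
    then obtain \<phi> :: "real^'d \<Rightarrow> real^'e" where
      "\<forall>h. \<phi> differentiable (at h)" "\<forall>G X i. emb Z G X i = \<phi> (emb M G X i)" by blast
    then have sub: "stationary Supp M \<subseteq> stationary Supp Z" by (rule surrogate_stationary)
    have "{t \<in> space (PiM {..<m} (\<lambda>_. \<mu>)). \<forall>k<m. t k \<in> stationary Supp Z} = space (PiM {..<m} (\<lambda>_. \<mu>))"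
    proof -
      have "\<forall>t \<in> space (PiM {..<m} (\<lambda>_. \<mu>)). \<forall>k<m. t k \<in> stationary Supp Z"
        using sub space_mu by (auto simp: space_PiM PiE_iff)
      then show ?thesis by blast
    qed
    then show "measure (PiM {..<m} (\<lambda>_. \<mu>))
          {t \<in> space (PiM {..<m} (\<lambda>_. \<mu>)). \<forall>k<m. t k \<in> stationary Supp Z}
        \<ge> 1 - exp (- 2 * real m * \<gamma>\<^sup>2)"
      by (simp add: P.prob_space)
  }
  assume Zi: "Z \<in> Indep"
  define B where "B = stationary Supp M - stationary Supp Z"
  have pg: "measure \<mu> B \<ge> \<gamma>" using gap Zi by (auto simp: B_def)
  have Bs: "B \<in> sets \<mu>"
  proof (rule ccontr)
    assume "B \<notin> sets \<mu>"
    then have "measure \<mu> B = 0" by (simp add: measure_notin_sets)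
    with pg gamma_pos show False by simp
  qed
  define S where "S = space \<mu> - B"
  have Ss: "S \<in> sets \<mu>" using Bs by (auto simp: S_def)
  have mS: "measure \<mu> S = 1 - measure \<mu> B"
    using mu.prob_compl[OF Bs] by (simp add: S_def)
  define A where "A = {t \<in> space (PiM {..<m} (\<lambda>_. \<mu>)). \<forall>k<m. t k \<in> stationary Supp Z}"
  have S_eq: "S = space \<mu> \<inter> stationary Supp Z" by (auto simp: S_def B_def space_mu)
  have AE: "A = PiE {..<m} (\<lambda>_. S)"
    unfolding A_def S_eq space_PiM by (auto simp: PiE_def Pi_def extensional_def)
  interpret pps: product_prob_space "\<lambda>_. \<mu>" "{..<m}" by unfold_locales
  have "emeasure (PiM {..<m} (\<lambda>_. \<mu>)) A = (\<Prod>i\<in>{..<m}. emeasure \<mu> S)"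
    unfolding AE by (rule pps.emeasure_PiM) (use Ss in auto)
  then have mA: "measure (PiM {..<m} (\<lambda>_. \<mu>)) A = (measure \<mu> S) ^ m"
  proof -
    assume h: "emeasure (PiM {..<m} (\<lambda>_. \<mu>)) A = (\<Prod>i\<in>{..<m}. emeasure \<mu> S)"
    have "(\<Prod>i\<in>{..<m}. emeasure \<mu> S) = (\<Prod>i\<in>{..<m}. ennreal (measure \<mu> S))"
      by (simp only: mu.emeasure_eq_measure)
    also have "\<dots> = ennreal (\<Prod>i\<in>{..<m}. measure \<mu> S)"
      by (rule prod_ennreal) simp
    also have "\<dots> = ennreal ((measure \<mu> S) ^ m)" by simp
    finally have "ennreal (measure (PiM {..<m} (\<lambda>_. \<mu>)) A) = ennreal ((measure \<mu> S) ^ m)"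
      using h by (simp only: P.emeasure_eq_measure)
    then show ?thesis by (subst (asm) ennreal_inj) auto
  qed
  have As: "A \<in> sets (PiM {..<m} (\<lambda>_. \<mu>))"
    unfolding AE using Ss by (auto intro!: sets_PiM_I_finite)
  have set_eq: "{t \<in> space (PiM {..<m} (\<lambda>_. \<mu>)). \<not> (\<forall>k<m. t k \<in> stationary Supp Z)}
      = space (PiM {..<m} (\<lambda>_. \<mu>)) - A" by (auto simp: A_def)
  have p1: "measure \<mu> B \<le> 1" by (rule mu.prob_le_1)
  have "measure \<mu> S \<le> exp (- 2 * (measure \<mu> B)\<^sup>2)"
    using ineq[of "measure \<mu> B"] pg gamma_pos p1 mS by simp
  also have "\<dots> \<le> exp (- 2 * \<gamma>\<^sup>2)"
    using pg gamma_pos by (simp add: power_mono)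
  finally have "(measure \<mu> S) ^ m \<le> (exp (- 2 * \<gamma>\<^sup>2)) ^ m"
    by (intro power_mono) (auto simp: mS p1)
  also have "\<dots> = exp (- 2 * real m * \<gamma>\<^sup>2)"
    by (simp add: exp_of_nat_mult[symmetric] algebra_simps)
  finally show "measure (PiM {..<m} (\<lambda>_. \<mu>))
          {t \<in> space (PiM {..<m} (\<lambda>_. \<mu>)). \<not> (\<forall>k<m. t k \<in> stationary Supp Z)}
        \<ge> 1 - exp (- 2 * real m * \<gamma>\<^sup>2)"
    unfolding set_eq P.prob_compl[OF As] mA by simp
qed

end
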